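(* Let $G=(V,E)$ be a simple, undirected, unweighted, connected, locally finite graph. Then for every edge $i\sim j$, $$\kappa(i,j)\ \ge\ \mathrm{Ric}(i,j).$$
   Context: $d_v$ is the degree of $v$, $S_1(v)$ its set of neighbours, $d_G$ the shortest-path distance. For an edge $i\sim j$: $\sharp_\Delta(i,j)=S_1(i)\cap S_1(j)$; $\sharp_\square^i(i,j)=\{k\in S_1(i)\setminus (S_1(j)\cup\{j\}) : \exists\, w\in (S_1(k)\cap S_1(j))\setminus (S_1(i)\cup\{i\})\}$ and $\sharp_\square^j(i,j)$ symmetrically; $\gamma_{\max}(i,j)=\max\big\{\max_{k\in\sharp_\square^i}|(S_1(k)\cap S_1(j))\setminus(S_1(i)\cup\{i\})|,\ \max_{w\in\sharp_\square^j}|(S_1(w)\cap S_1(i))\setminus(S_1(j)\cup\{j\})|\big\}$. Balanced Forman curvature: $\mathrm{Ric}(i,j)=0$ if $\min\{d_i,d_j\}=1$; otherwise $$\mathrm{Ric}(i,j)=\frac{2}{d_i}+\frac{2}{d_j}-2+\frac{2|\sharp_\Delta|}{\max\{d_i,d_j\}}+\frac{|\sharp_\Delta|}{\min\{d_i,d_j\}}+\frac{\gamma_{\max}^{-1}}{\max\{d_i,d_j\}}\big(|\sharp_\square^i|+|\sharp_\square^j|\big),$$ where the last term is $0$ if $\sharp_\square^i=\emptyset$. Ollivier curvature: for $\alpha\in[0,1)$ let $\mu_v^\alpha$ be the probability measure with mass $\alpha$ at $v$, $(1-\alpha)/d_v$ at each neighbour of $v$, and $0$ elsewhere; $W_1$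 is the $L^1$-Wasserstein (transportation) distance with respect to $d_G$; $\kappa(i,j)=\lim_{\alpha\to1}\frac{1-W_1(\mu_i^\alpha,\mu_j^\alpha)}{1-\alpha}$. *)

theory Defs
  imports "HOL-Analysis.Analysis"
begin

text \<open>A graph on vertex type 'a (vertex set = UNIV) is given by an adjacency relation E.\<close>

definition simple_graph :: "('a \<Rightarrow> 'a \<Rightarrow> bool) \<Rightarrow> bool" where
  "simple_graph E \<longleftrightarrow> (\<forall>x y. E x y \<longrightarrow> E y x) \<and> (\<forall>x. \<not> E x x)"

definition locally_finite :: "('a \<Rightarrow> 'a \<Rightarrow> bool) \<Rightarrow> bool" where
  "locally_finite E \<longleftrightarrow> (\<forall>x. finite {y. E x y})"

definition connected_graph :: "('a \<Rightarrow> 'a \<Rightarrow> bool) \<Rightarrow> bool" where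
  "connected_graph E \<longleftrightarrow> (\<forall>x y. E\<^sup>*\<^sup>* x y)"

definition nbrs :: "('a \<Rightarrow> 'a \<Rightarrow> bool) \<Rightarrow> 'a \<Rightarrow> 'a set" where
  "nbrs E v = {u. E v u}"

definition deg :: "('a \<Rightarrow> 'a \<Rightarrow> bool) \<Rightarrow> 'a \<Rightarrow> nat" where
  "deg E v = card (nbrs E v)"

definition gdist :: "('a \<Rightarrow> 'a \<Rightarrow> bool) \<Rightarrow> 'a \<Rightarrow> 'a \<Rightarrow> nat" where
  "gdist E x y = (LEAST n. (E ^^ n) x y)"

definition tri :: "('a \<Rightarrow> 'a \<Rightarrow> bool) \<Rightarrow> 'a \<Rightarrow> 'a \<Rightarrow> 'a set" where
  "tri E i j = nbrs E i \<inter> nbrs E j"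

definition sqw :: "('a \<Rightarrow> 'a \<Rightarrow> bool) \<Rightarrow> 'a \<Rightarrow> 'a \<Rightarrow> 'a \<Rightarrow> 'a set" where
  "sqw E i j k = (nbrs E k \<inter> nbrs E j) - (nbrs E i \<union> {i})"

definition sq :: "('a \<Rightarrow> 'a \<Rightarrow> bool) \<Rightarrow> 'a \<Rightarrow> 'a \<Rightarrow> 'a set" where
  "sq E i j = {k \<in> nbrs E i - (nbrs E j \<union> {j}). \<exists>w. w \<in> sqw E i j k}"

definition gamma_max :: "('a \<Rightarrow> 'a \<Rightarrow> bool) \<Rightarrow> 'a \<Rightarrow> 'a \<Rightarrow> nat" where
  "gamma_max E i j = max (Max ((\<lambda>k. card (sqw E i j k)) ` sq E i j))
                         (Max ((\<lambda>w. card (sqw E j i w)) ` sq E j i))"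

definition bfc :: "('a \<Rightarrow> 'a \<Rightarrow> bool) \<Rightarrow> 'a \<Rightarrow> 'a \<Rightarrow> real" where
  "bfc E i j =
    (let di = real (deg E i); dj = real (deg E j) in
     if min di dj = 1 then 0
     else 2 / di + 2 / dj - 2
          + 2 * real (card (tri E i j)) / max di dj
          + real (card (tri E i j)) / min di dj
          + (if sq E i j = {} then 0
             else (inverse (real (gamma_max E i j)) / max di dj)
                  * (real (card (sq E i j)) + real (card (sq E j i)))))"

definition mu :: "('a \<Rightarrow> 'a \<Rightarrow> bool) \<Rightarrow> real \<Rightarrow> 'a \<Rightarrow> 'a \<Rightarrow> real" where
  "mu E \<alpha> v x = (if x = v then \<alpha> else if E v x then (1 - \<alpha>) / real (deg E v) else 0)"

definition couplings :: "'a set \<Rightarrow> ('a \<Rightarrow> real) \<Rightarrow> ('a \<Rightarrow> real) \<Rightarrow> ('a \<Rightarrow> 'a \<Rightarrow> real) set" where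
  "couplings S m1 m2 = {\<pi>. (\<forall>x y. 0 \<le> \<pi> x y) \<and> (\<forall>x y. (x \<notin> S \<or> y \<notin> S) \<longrightarrow> \<pi> x y = 0)
       \<and> (\<forall>x\<in>S. (\<Sum>y\<in>S. \<pi> x y) = m1 x) \<and> (\<forall>y\<in>S. (\<Sum>x\<in>S. \<pi> x y) = m2 y)}"

definition W1 :: "('a \<Rightarrow> 'a \<Rightarrow> bool) \<Rightarrow> ('a \<Rightarrow> real) \<Rightarrow> ('a \<Rightarrow> real) \<Rightarrow> real" where
  "W1 E m1 m2 =
    (let S = {x. m1 x \<noteq> 0} \<union> {x. m2 x \<noteq> 0} in
     Inf ((\<lambda>\<pi>. \<Sum>x\<in>S. \<Sum>y\<in>S. \<pi> x y * real (gdist E x y)) ` couplings S m1 m2))"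

definition ollivier :: "('a \<Rightarrow> 'a \<Rightarrow> bool) \<Rightarrow> 'a \<Rightarrow> 'a \<Rightarrow> real" where
  "ollivier E i j = Lim (at_left 1) (\<lambda>\<alpha>. (1 - W1 E (mu E \<alpha> i) (mu E \<alpha> j)) / (1 - \<alpha>))"

end

theory Submission
  imports Defs
begin

locale G =
  fixes E :: "'a \<Rightarrow> 'a \<Rightarrow> bool"
  assumes sg: "simple_graph E" and lf: "locally_finite E" and cg: "connected_graph E"
begin

lemma symE: "E x y \<Longrightarrow> E y x" using sg unfolding simple_graph_def by blast
lemma irr: "\<not> E x x" using sg unfolding simple_graph_def by blast
lemma finN: "finite (nbrs E x)" using lf unfolding locally_finite_def nbrs_def by blast
lemma ex_path: "\<exists>n. (E^^n) x y"
proof -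
  have "E\<^sup>*\<^sup>* x y" using cg unfolding connected_graph_def by blast
  then show ?thesis by (rule rtranclp_imp_relpowp)
qed
lemma gdist_le: "(E^^n) x y \<Longrightarrow> gdist E x y \<le> n" unfolding gdist_def by (rule Least_le)
lemma gdist_refl: "gdist E x x = 0"
  using gdist_le[of 0 x x] relpowp_0_I[of E x] by linarith
lemma gdist_ge1: assumes "x \<noteq> y" shows "gdist E x y \<ge> 1"
proof -
  have "(E^^(gdist E x y)) x y" unfolding gdist_def using ex_path by (rule LeastI_ex)
  with assms show ?thesis by (cases "gdist E x y") auto
qed
lemma relpow_sym: "(E^^n) x y \<Longrightarrow> (E^^n) y x"
proof (induction n arbitrary: x y)
  case 0 then show ?case by simp
next
  case (Suc n)
  from Suc.prems obtain z where "(E^^n) x z" "E z y" by (rule relpowp_Suc_E)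
  then have "E y z" "(E^^n) z x" using Suc.IH symE by auto
  then show ?case by (rule relpowp_Suc_I2[where P=E])
qed
lemma gdist_sym: "gdist E x y = gdist E y x"
proof -
  have "\<And>n. (E^^n) x y = (E^^n) y x" using relpow_sym by blast
  then show ?thesis unfolding gdist_def by simp
qed
lemma gdist_1: "E x y \<Longrightarrow> gdist E x y \<le> 1"
  by (metis gdist_le relpowp_1)
lemma gdist_2: "E x z \<Longrightarrow> E z y \<Longrightarrow> gdist E x y \<le> 2"
proof -
  assume a: "E x z" "E z y"
  have "(E^^2) x y" using a by (force simp: numeral_2_eq_2)
  then show ?thesis by (rule gdist_le)
qed
lemma gdist_3: "E x z \<Longrightarrow> E z w \<Longrightarrow> E w y \<Longrightarrow> gdist E x y \<le> 3"
proof -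
  assume a: "E x z" "E z w" "E w y"
  have "(E^^3) x y" using a by (force simp: numeral_3_eq_3)
  then show ?thesis by (rule gdist_le)
qed

lemma deg_pos: "E v w \<Longrightarrow> deg E v > 0"
  unfolding deg_def using finN[of v] card_gt_0_iff by (auto simp: nbrs_def)

lemma mu_nonneg: "0 \<le> \<alpha> \<Longrightarrow> \<alpha> \<le> 1 \<Longrightarrow> 0 \<le> mu E \<alpha> v x"
  unfolding mu_def by auto

lemma mu_supp: "0 < \<alpha> \<Longrightarrow> \<alpha> < 1 \<Longrightarrow> E v w \<Longrightarrow> {x. mu E \<alpha> v x \<noteq> 0} = insert v (nbrs E v)"
  using deg_pos[of v w] unfolding mu_def nbrs_def by auto

lemma sum_mu:
  assumes "finite S" "insert v (nbrs E v) \<subseteq> S" "E v w"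
  shows "(\<Sum>x\<in>S. mu E \<alpha> v x) = 1"
proof -
  have "(\<Sum>x\<in>S. mu E \<alpha> v x) = (\<Sum>x\<in>insert v (nbrs E v). mu E \<alpha> v x)"
    by (rule sum.mono_neutral_right) (use assms finN[of v] in \<open>auto simp: mu_def nbrs_def\<close>)
  also have "\<dots> = \<alpha> + (\<Sum>x\<in>nbrs E v. (1 - \<alpha>) / real (deg E v))"
  proof -
    have "(\<Sum>x\<in>nbrs E v. mu E \<alpha> v x) = (\<Sum>x\<in>nbrs E v. (1 - \<alpha>) / real (deg E v))"
      by (rule sum.cong) (use irr[of v] in \<open>auto simp: mu_def nbrs_def\<close>)
    moreover have "v \<notin> nbrs E v" using irr[of v] by (simp add: nbrs_def)
    ultimately show ?thesis using finN[of v] by (simp add: mu_def)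
  qed
  also have "\<dots> = 1" using deg_pos[OF assms(3)] by (simp add: deg_def)
  finally show ?thesis .
qed

end

locale E2 = G +
  fixes i j
  assumes eij: "E i j"
begin

definition S0 where "S0 = nbrs E i \<union> nbrs E j"
definition cost where "cost \<pi> = (\<Sum>x\<in>S0. \<Sum>y\<in>S0. \<pi> x y * real (gdist E x y))"
definition C where "C \<alpha> = couplings S0 (mu E \<alpha> i) (mu E \<alpha> j)"
definition W where "W \<alpha> = W1 E (mu E \<alpha> i) (mu E \<alpha> j)"
definition f where "f \<alpha> = (1 - W \<alpha>) / (1 - \<alpha>)"

lemma eji: "E j i" using symE eij .
lemma ij: "i \<noteq> j" using irr eij by auto
lemma finS: "finite S0" unfolding S0_def using finN by auto
lemma iS: "i \<in> S0" and jS: "j \<in> S0" unfolding S0_def nbrs_def using eij eji by auto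
lemma insS: "insert i (nbrs E i) \<subseteq> S0" "insert j (nbrs E j) \<subseteq> S0"
  using iS jS unfolding S0_def by auto

lemma W_eq: assumes "0 < \<alpha>" "\<alpha> < 1" shows "W \<alpha> = Inf (cost ` C \<alpha>)"
proof -
  have "{x. mu E \<alpha> i x \<noteq> 0} \<union> {x. mu E \<alpha> j x \<noteq> 0} = S0"
    using mu_supp[OF assms eij] mu_supp[OF assms eji] iS jS unfolding S0_def by auto
  then show ?thesis unfolding W_def W1_def C_def cost_def Let_def by simp
qed

lemma cost_nonneg: "\<pi> \<in> C \<alpha> \<Longrightarrow> 0 \<le> cost \<pi>"
  unfolding C_def couplings_def cost_def by (auto intro!: sum_nonneg)

lemma prod_coupling: assumes "0 < \<alpha>" "\<alpha> < 1"
  shows "(\<lambda>x y. if x \<in> S0 \<and> y \<in> S0 then mu E \<alpha> i x * mu E \<alpha> j y else 0) \<in> C \<alpha>"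
proof -
  have si: "(\<Sum>x\<in>S0. mu E \<alpha> i x) = 1" by (rule sum_mu[OF finS insS(1) eij])
  have sj: "(\<Sum>x\<in>S0. mu E \<alpha> j x) = 1" by (rule sum_mu[OF finS insS(2) eji])
  show ?thesis unfolding C_def couplings_def
    using assms si sj by (auto simp: mu_nonneg sum_distrib_left[symmetric] sum_distrib_right[symmetric])
qed

lemma C_ne: "0 < \<alpha> \<Longrightarrow> \<alpha> < 1 \<Longrightarrow> C \<alpha> \<noteq> {}"
  using prod_coupling by blast

lemma W_le: "0 < \<alpha> \<Longrightarrow> \<alpha> < 1 \<Longrightarrow> \<pi> \<in> C \<alpha> \<Longrightarrow> W \<alpha> \<le> cost \<pi>"
  unfolding W_eq by (rule cInf_lower) (auto intro: bdd_belowI[where m=0] cost_nonneg)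

lemma W_ge: "0 < \<alpha> \<Longrightarrow> \<alpha> < 1 \<Longrightarrow> (\<And>\<pi>. \<pi> \<in> C \<alpha> \<Longrightarrow> L \<le> cost \<pi>) \<Longrightarrow> L \<le> W \<alpha>"
  unfolding W_eq by (rule cInf_greatest) (use C_ne in auto)

lemma cost_mix: "cost (\<lambda>x y. t * \<pi> x y + c * (if x = i \<and> y = j then 1 else 0)) = t * cost \<pi> + c * real (gdist E i j)"
proof -
  have "cost (\<lambda>x y. t * \<pi> x y + c * (if x = i \<and> y = j then 1 else 0))
     = (\<Sum>x\<in>S0. \<Sum>y\<in>S0. t * (\<pi> x y * real (gdist E x y))) +
       (\<Sum>x\<in>S0. \<Sum>y\<in>S0. (if x = i then (if y = j then c * real (gdist E i j) else 0) else 0))"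
  proof -
    have "\<And>x y. (t * \<pi> x y + c * (if x = i \<and> y = j then 1 else 0)) * real (gdist E x y)
       = t * (\<pi> x y * real (gdist E x y)) + (if x = i then (if y = j then c * real (gdist E i j) else 0) else 0)"
      by (auto simp: algebra_simps)
    then show ?thesis unfolding cost_def by (simp add: sum.distrib)
  qed
  also have "\<dots> = t * cost \<pi> + c * real (gdist E i j)"
  proof -
    have "\<And>x. (\<Sum>y\<in>S0. if x = i then if y = j then c * real (gdist E i j) else 0 else 0)
        = (if x = i then c * real (gdist E i j) else 0)" using jS finS by auto
    then show ?thesis using iS jS finS by (simp add: cost_def sum_distrib_left)
  qed
  finally show ?thesis .
qed

lemma mix_coupling:
  assumes a: "0 < \<alpha>" "\<alpha> < \<beta>" "\<beta> < 1" and p: "\<pi> \<in> C \<alpha>"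
  defines "t \<equiv> (1 - \<beta>) / (1 - \<alpha>)"
  shows "(\<lambda>x y. t * \<pi> x y + (1 - t) * (if x = i \<and> y = j then 1 else 0)) \<in> C \<beta>"
proof -
  have t0: "0 < t" "t < 1" using a unfolding t_def by (auto simp: field_simps)
  have n0: "1 - \<alpha> \<noteq> 0" using a by simp
  have k0: "t * (1 - \<alpha>) = 1 - \<beta>" unfolding t_def using n0 by simp
  have k1: "t * \<alpha> + (1 - t) = \<beta>" using k0 by (simp add: algebra_simps)
  have k2: "t * ((1 - \<alpha>) / d) = (1 - \<beta>) / d" for d using k0 by (simp add: mult.assoc[symmetric])
  have key: "t * mu E \<alpha> v x + (1 - t) * (if x = v then 1 else 0) = mu E \<beta> v x" for v x
    unfolding mu_def using k1 k2 by auto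
  have r: "(\<Sum>y\<in>S0. t * \<pi> x y + (1 - t) * (if x = i \<and> y = j then 1 else 0)) = mu E \<beta> i x" if "x \<in> S0" for x
  proof -
    have "(\<Sum>y\<in>S0. t * \<pi> x y + (1 - t) * (if x = i \<and> y = j then 1 else 0))
        = t * (\<Sum>y\<in>S0. \<pi> x y) + (\<Sum>y\<in>S0. (if y = j then (if x = i then 1 - t else 0) else 0))"
    proof -
      have "\<And>y. t * \<pi> x y + (1 - t) * (if x = i \<and> y = j then 1 else 0) = t * \<pi> x y + (if y = j then (if x = i then 1 - t else 0) else 0)"
        by auto
      then show ?thesis by (simp add: sum.distrib sum_distrib_left)
    qed
    also have "\<dots> = t * mu E \<alpha> i x + (1 - t) * (if x = i then 1 else 0)"
      using p that jS finS unfolding C_def couplings_def by auto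
    finally show ?thesis using key by simp
  qed
  have c: "(\<Sum>x\<in>S0. t * \<pi> x y + (1 - t) * (if x = i \<and> y = j then 1 else 0)) = mu E \<beta> j y" if "y \<in> S0" for y
  proof -
    have "(\<Sum>x\<in>S0. t * \<pi> x y + (1 - t) * (if x = i \<and> y = j then 1 else 0))
        = t * (\<Sum>x\<in>S0. \<pi> x y) + (\<Sum>x\<in>S0. (if x = i then (if y = j then 1 - t else 0) else 0))"
    proof -
      have "\<And>x. t * \<pi> x y + (1 - t) * (if x = i \<and> y = j then 1 else 0) = t * \<pi> x y + (if x = i then (if y = j then 1 - t else 0) else 0)"
        by auto
      then show ?thesis by (simp add: sum.distrib sum_distrib_left)
    qed
    also have "\<dots> = t * mu E \<alpha> j y + (1 - t) * (if y = j then 1 else 0)"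
      using p that iS finS unfolding C_def couplings_def by auto
    finally show ?thesis using key by simp
  qed
  show ?thesis unfolding C_def couplings_def
    using p t0 r c iS jS unfolding C_def couplings_def by auto
qed

lemma f_mono: assumes a: "0 < \<alpha>" "\<alpha> < \<beta>" "\<beta> < 1" shows "f \<alpha> \<le> f \<beta>"
proof -
  define t where "t = (1 - \<beta>) / (1 - \<alpha>)"
  have t0: "0 < t" "t < 1" using a unfolding t_def by (auto simp: field_simps)
  have "(W \<beta> - (1 - t)) / t \<le> W \<alpha>"
  proof (rule W_ge)
    fix \<pi> assume p: "\<pi> \<in> C \<alpha>"
    have "W \<beta> \<le> cost (\<lambda>x y. t * \<pi> x y + (1 - t) * (if x = i \<and> y = j then 1 else 0))"
      using W_le[of \<beta>] mix_coupling[OF a p] a unfolding t_def by auto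
    also have "\<dots> = t * cost \<pi> + (1 - t) * real (gdist E i j)" by (rule cost_mix)
    also have "\<dots> \<le> t * cost \<pi> + (1 - t)" using gdist_1[OF eij] t0 by simp
    finally show "(W \<beta> - (1 - t)) / t \<le> cost \<pi>" using t0 by (simp add: field_simps)
  qed (use a in auto)
  then have "W \<beta> \<le> t * W \<alpha> + (1 - t)" using t0 by (simp add: field_simps)
  then have "t * (1 - W \<alpha>) \<le> 1 - W \<beta>" by (simp add: algebra_simps)
  then show ?thesis using a unfolding f_def t_def by (simp add: field_simps)
qed

lemma f_bdd: assumes a: "0 < \<alpha>" "\<alpha> < 1" shows "f \<alpha> \<le> 2"
proof -
  have "2 * \<alpha> - 1 \<le> W \<alpha>"
  proof (rule W_ge[OF a])
    fix \<pi> assume p: "\<pi> \<in> C \<alpha>"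
    have nn: "\<And>x y. 0 \<le> \<pi> x y" using p unfolding C_def couplings_def by auto
    have row: "(\<Sum>y\<in>S0. \<pi> i y) = \<alpha>" using p iS unfolding C_def couplings_def by (auto simp: mu_def)
    have col: "(\<Sum>x\<in>S0. \<pi> x i) = (1 - \<alpha>) / real (deg E j)"
      using p iS eji ij unfolding C_def couplings_def by (auto simp: mu_def)
    have dj: "real (deg E j) \<ge> 1" using deg_pos[OF eji] by simp
    have pii: "\<pi> i i \<le> 1 - \<alpha>"
    proof -
      have "\<pi> i i \<le> (\<Sum>x\<in>S0. \<pi> x i)" by (rule member_le_sum) (use iS finS nn in auto)
      also have "\<dots> \<le> (1 - \<alpha>) / 1" unfolding col using a dj by (intro divide_left_mono) auto
      also have "\<dots> = 1 - \<alpha>" by simp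
      finally show ?thesis .
    qed
    have "cost \<pi> \<ge> (\<Sum>y\<in>S0. \<pi> i y * real (gdist E i y))"
      unfolding cost_def by (rule member_le_sum) (use iS finS nn in \<open>auto intro!: sum_nonneg\<close>)
    moreover have "(\<Sum>y\<in>S0. \<pi> i y * real (gdist E i y)) = (\<Sum>y\<in>S0-{i}. \<pi> i y * real (gdist E i y))"
      using sum.remove[OF finS iS, of "\<lambda>y. \<pi> i y * real (gdist E i y)"] by (simp add: gdist_refl)
    moreover have "(\<Sum>y\<in>S0-{i}. \<pi> i y * real (gdist E i y)) \<ge> (\<Sum>y\<in>S0-{i}. \<pi> i y)"
    proof (rule sum_mono)
      fix y assume "y \<in> S0 - {i}"
      then have "real (gdist E i y) \<ge> 1" using gdist_ge1[of i y] by auto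
      then show "\<pi> i y \<le> \<pi> i y * real (gdist E i y)" using nn[of i y] by (metis mult_left_mono mult.right_neutral)
    qed
    moreover have "(\<Sum>y\<in>S0-{i}. \<pi> i y) = \<alpha> - \<pi> i i"
      using sum.remove[OF finS iS, of "\<lambda>y. \<pi> i y"] row by simp
    ultimately show "2 * \<alpha> - 1 \<le> cost \<pi>" using pii by linarith
  qed
  then show ?thesis using a unfolding f_def by (simp add: field_simps)
qed

end

lemma sum_ind: "finite S \<Longrightarrow> X \<subseteq> S \<Longrightarrow> (\<Sum>x\<in>S. if x \<in> X then h x else 0) = (\<Sum>x\<in>X. h x)"
proof -
  assume a: "finite S" "X \<subseteq> S"
  then have "{x \<in> S. x \<in> X} = X" by auto
  then show ?thesis using sum.inter_filter[OF a(1), of h "\<lambda>x. x \<in> X"] by simp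
qed

context E2 begin

lemma cost_add: "cost (\<lambda>x y. p x y + q x y) = cost p + cost q"
  unfolding cost_def by (simp add: algebra_simps sum.distrib)

definition "T = tri E i j"
definition "A = nbrs E i - (nbrs E j \<union> {j})"
definition "B = nbrs E j - (nbrs E i \<union> {i})"

lemma memb:
  "i \<notin> T" "j \<notin> T" "i \<notin> A" "j \<notin> A" "i \<notin> B" "j \<notin> B"
  "x \<in> T \<Longrightarrow> x \<notin> A" "x \<in> T \<Longrightarrow> x \<notin> B" "x \<in> A \<Longrightarrow> x \<notin> B"
  "x \<in> T \<Longrightarrow> E i x" "x \<in> T \<Longrightarrow> E j x" "x \<in> A \<Longrightarrow> E i x" "x \<in> A \<Longrightarrow> \<not> E j x"
  "x \<in> B \<Longrightarrow> E j x" "x \<in> B \<Longrightarrow> \<not> E i x"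
  unfolding T_def A_def B_def tri_def nbrs_def using irr by auto

lemma subS: "T \<subseteq> S0" "A \<subseteq> S0" "B \<subseteq> S0"
  unfolding T_def A_def B_def tri_def S0_def by auto

lemma finTAB: "finite T" "finite A" "finite B"
  using subS finS finite_subset by blast+

lemma S0_cases: assumes "x \<in> S0"
  obtains "x = i" | "x = j" | "x \<in> T" | "x \<in> A" | "x \<in> B"
  using assms unfolding S0_def T_def A_def B_def tri_def by auto

lemma Ni_eq: "nbrs E i = insert j (T \<union> A)" and Nj_eq: "nbrs E j = insert i (T \<union> B)"
  unfolding T_def A_def B_def tri_def nbrs_def using eij eji by auto

lemma card_i: "deg E i = 1 + card T + card A"
proof -
  have "card (insert j (T \<union> A)) = Suc (card (T \<union> A))"
    using finTAB memb by (intro card_insert_disjoint) auto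
  moreover have "card (T \<union> A) = card T + card A"
    using finTAB memb by (intro card_Un_disjoint) auto
  ultimately show ?thesis unfolding deg_def Ni_eq by simp
qed

lemma card_j: "deg E j = 1 + card T + card B"
proof -
  have "card (insert i (T \<union> B)) = Suc (card (T \<union> B))"
    using finTAB memb by (intro card_insert_disjoint) auto
  moreover have "card (T \<union> B) = card T + card B"
    using finTAB memb by (intro card_Un_disjoint) auto
  ultimately show ?thesis unfolding deg_def Nj_eq by simp
qed

lemma sqw_A: "x \<in> A \<Longrightarrow> {y \<in> S0. y \<in> B \<and> E x y} = sqw E i j x"
  unfolding sqw_def B_def nbrs_def S0_def using symE by auto

lemma sqw_B: "y \<in> B \<Longrightarrow> {x \<in> S0. x \<in> A \<and> E x y} = sqw E j i y"
  unfolding sqw_def A_def nbrs_def S0_def using symE by auto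

lemma sq_sub: "sq E i j \<subseteq> A" "sq E j i \<subseteq> B"
  unfolding sq_def A_def B_def by auto

lemma fin_sq: "finite (sq E i j)" "finite (sq E j i)"
  using sq_sub finTAB finite_subset by blast+

lemma card_sqw_A: assumes "x \<in> A" "sqw E i j x \<noteq> {}"
  shows "card (sqw E i j x) \<le> gamma_max E i j"
proof -
  have "x \<in> sq E i j" using assms unfolding sq_def A_def by auto
  then have "card (sqw E i j x) \<le> Max ((\<lambda>k. card (sqw E i j k)) ` sq E i j)"
    using fin_sq by (intro Max_ge) auto
  then show ?thesis unfolding gamma_max_def by simp
qed

lemma card_sqw_B: assumes "y \<in> B" "sqw E j i y \<noteq> {}"
  shows "card (sqw E j i y) \<le> gamma_max E i j"
proof -
  have "y \<in> sq E j i" using assms unfolding sq_def B_def by auto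
  then have "card (sqw E j i y) \<le> Max ((\<lambda>k. card (sqw E j i k)) ` sq E j i)"
    using fin_sq by (intro Max_ge) auto
  then show ?thesis unfolding gamma_max_def by simp
qed

end



locale E3 = E2 +
  assumes dle: "deg E i \<le> deg E j"
begin

definition "a = 1 / real (deg E i)"
definition "b = 1 / real (deg E j)"
definition "c = b / 2 * inverse (real (gamma_max E i j))"
definition "fl x y = (if x \<in> A \<and> y \<in> B \<and> E x y then c else 0)"
definition "fr x = (\<Sum>y\<in>S0. fl x y)"
definition "fc y = (\<Sum>x\<in>S0. fl x y)"
definition "s x = (if x = i then (a - b) / 2 else 0) + (if x \<in> T then (a - b) / 2 else 0) + (if x \<in> A then a / 2 - fr x else 0)"
definition "r y = (if y \<in> B then b / 2 - fc y else 0)"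
definition "R = (\<Sum>y\<in>S0. r y)"
definition "g x = (if x = i then b / 2 else 0) + (if x = j then a / 2 else 0) + (if x \<in> T then b / 2 else 0)"
definition "m = (1 - a) / 2"
definition "F = (\<Sum>x\<in>S0. fr x)"

lemma di1: "real (deg E i) \<ge> 1" using deg_pos[OF eij] by simp
lemma dj1: "real (deg E j) \<ge> 1" using deg_pos[OF eji] by simp
lemma ab: "0 < b" "b \<le> a" "a \<le> 1"
  using di1 dj1 dle unfolding a_def b_def by (auto simp: frac_le)
lemma c0: "0 \<le> c" unfolding c_def using ab by simp
lemma fl0: "0 \<le> fl x y" unfolding fl_def using c0 by simp
lemma fr0: "0 \<le> fr x" unfolding fr_def using fl0 by (simp add: sum_nonneg)
lemma fc0: "0 \<le> fc x" unfolding fc_def using fl0 by (simp add: sum_nonneg)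

lemma fr_out: "x \<notin> A \<Longrightarrow> fr x = 0" unfolding fr_def fl_def by simp
lemma fc_out: "y \<notin> B \<Longrightarrow> fc y = 0" unfolding fc_def fl_def by simp

lemma cbound: assumes "real k \<le> real (gamma_max E i j)" shows "c * real k \<le> b / 2"
proof (cases "k = 0")
  case True then show ?thesis using ab by simp
next
  case False
  then have "real (gamma_max E i j) > 0" using assms by linarith
  then have "c * real k \<le> c * real (gamma_max E i j)" using assms c0 by (intro mult_left_mono) auto
  also have "\<dots> = b / 2" unfolding c_def using \<open>real (gamma_max E i j) > 0\<close> by simp
  finally show ?thesis .
qed

lemma fr_le: assumes "x \<in> A" shows "fr x \<le> b / 2"
proof -
  have "fr x = (\<Sum>y\<in>{y \<in> S0. y \<in> B \<and> E x y}. c)"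
    unfolding fr_def fl_def sum.inter_filter[OF finS] using assms by simp
  also have "\<dots> = c * real (card (sqw E i j x))" using sqw_A[OF assms] by simp
  also have "\<dots> \<le> b / 2"
  proof (cases "sqw E i j x = {}")
    case True then show ?thesis using ab by simp
  next
    case False then show ?thesis using card_sqw_A[OF assms False] by (intro cbound) simp
  qed
  finally show ?thesis .
qed

lemma fc_le: assumes "y \<in> B" shows "fc y \<le> b / 2"
proof -
  have "fc y = (\<Sum>x\<in>{x \<in> S0. x \<in> A \<and> E x y}. c)"
    unfolding fc_def fl_def sum.inter_filter[OF finS] using assms by simp
  also have "\<dots> = c * real (card (sqw E j i y))" using sqw_B[OF assms] by simp
  also have "\<dots> \<le> b / 2"
  proof (cases "sqw E j i y = {}")
    case True then show ?thesis using ab by simp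
  next
    case False then show ?thesis using card_sqw_B[OF assms False] by (intro cbound) simp
  qed
  finally show ?thesis .
qed

lemma s0: "0 \<le> s x"
  unfolding s_def using ab fr_le[of x] by auto
lemma r0: "0 \<le> r y"
  unfolding r_def using fc_le[of y] by auto

lemma s_out: "x \<notin> S0 \<Longrightarrow> s x = 0"
  unfolding s_def using subS iS by auto
lemma r_out: "y \<notin> B \<Longrightarrow> r y = 0"
  unfolding r_def by auto

lemma sum_fr_fc: "F = (\<Sum>y\<in>S0. fc y)"
  unfolding F_def fr_def fc_def by (rule sum.swap)

lemma sum_s: "(\<Sum>x\<in>S0. s x) = (a - b) / 2 * (1 + real (card T)) + a / 2 * real (card A) - F"
proof -
  have "(\<Sum>x\<in>S0. s x) = (\<Sum>x\<in>S0. if x = i then (a - b) / 2 else 0) + (\<Sum>x\<in>S0. if x \<in> T then (a - b) / 2 else 0)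
      + (\<Sum>x\<in>S0. if x \<in> A then a / 2 - fr x else 0)"
    unfolding s_def by (simp add: sum.distrib)
  also have "\<dots> = (a - b) / 2 + (a - b) / 2 * real (card T) + (\<Sum>x\<in>A. a / 2 - fr x)"
    using iS finS subS by (simp add: sum_ind)
  moreover have "(\<Sum>x\<in>A. a / 2 - fr x) = a / 2 * real (card A) - (\<Sum>x\<in>A. fr x)"
    by (simp add: sum_subtractf)
  moreover have "(\<Sum>x\<in>A. fr x) = F"
  proof -
    have "(\<Sum>x\<in>S0. fr x) = (\<Sum>x\<in>S0. if x \<in> A then fr x else 0)"
      using fr_out by (intro sum.cong) auto
    then show ?thesis unfolding F_def using finS subS by (simp add: sum_ind)
  qed
  ultimately show ?thesis by (simp add: field_simps)
qed

lemma sum_r: "R = b / 2 * real (card B) - F"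
proof -
  have "R = (\<Sum>y\<in>B. b / 2 - fc y)" unfolding R_def r_def using finS subS by (simp add: sum_ind)
  also have "\<dots> = b / 2 * real (card B) - (\<Sum>y\<in>B. fc y)" by (simp add: sum_subtractf)
  also have "(\<Sum>y\<in>B. fc y) = F"
  proof -
    have "(\<Sum>y\<in>S0. fc y) = (\<Sum>y\<in>S0. if y \<in> B then fc y else 0)"
      using fc_out by (intro sum.cong) auto
    then show ?thesis unfolding sum_fr_fc using finS subS by (simp add: sum_ind)
  qed
  finally show ?thesis .
qed

lemma adi: "a * real (deg E i) = 1" and bdj: "b * real (deg E j) = 1"
  unfolding a_def b_def using di1 dj1 by auto

lemma sum_s_R: "(\<Sum>x\<in>S0. s x) = R"
proof -
  have ci: "real (card A) = real (deg E i) - 1 - real (card T)" using card_i by simp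
  have cj: "real (card B) = real (deg E j) - 1 - real (card T)" using card_j by simp
  have "(a - b) / 2 * (1 + real (card T)) + a / 2 * real (card A) = b / 2 * real (card B)"
    unfolding ci cj using adi bdj by (simp add: field_simps)
  then show ?thesis unfolding sum_s sum_r by simp
qed

lemma R0: "0 \<le> R" unfolding R_def using r0 by (simp add: sum_nonneg)

lemma sRR: "s x * R / R = s x"
proof (cases "R = 0")
  case True
  then have "(\<Sum>x\<in>S0. s x) = 0" using sum_s_R by simp
  then have "\<forall>x\<in>S0. s x = 0" using sum_nonneg_eq_0_iff[OF finS] s0 by blast
  then have "s x = 0" using s_out by (cases "x \<in> S0") auto
  then show ?thesis by simp
qed simp

lemma rRR: "r y * R / R = r y"
proof (cases "R = 0")
  case True
  then have "\<forall>x\<in>S0. r x = 0" using sum_nonneg_eq_0_iff[OF finS] r0 unfolding R_def by blast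
  then have "r y = 0" using r_out subS by (cases "y \<in> S0") blast+
  then show ?thesis by simp
qed simp

end


context E3 begin

definition "P1 x y = (if x = y then g x else 0)"
definition "P2 x y = m * (if x = i \<and> y = j then 1 else 0)"
definition "P4 x y = s x * r y / R"
definition "PI x y = P1 x y + P2 x y + fl x y + P4 x y"

lemma mu_i: "mu E (1/2) i x = (if x = i then 1/2 else if E i x then a/2 else 0)"
  unfolding mu_def a_def by simp
lemma mu_j: "mu E (1/2) j x = (if x = j then 1/2 else if E j x then b/2 else 0)"
  unfolding mu_def b_def by simp

lemma g_out: "x \<notin> S0 \<Longrightarrow> g x = 0" unfolding g_def using iS jS subS by auto
lemma fl_out: "x \<notin> S0 \<or> y \<notin> S0 \<Longrightarrow> fl x y = 0" unfolding fl_def using subS by auto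
lemma r_out2: "y \<notin> S0 \<Longrightarrow> r y = 0" using r_out subS by blast
lemma m0: "0 \<le> m" unfolding m_def using ab by simp
lemma g0: "0 \<le> g x" unfolding g_def using ab by simp

lemma row: assumes "x \<in> S0" shows "(\<Sum>y\<in>S0. PI x y) = mu E (1/2) i x"
proof -
  have "(\<Sum>y\<in>S0. PI x y) = g x + (if x = i then m else 0) + fr x + s x * R / R"
    unfolding PI_def P1_def P2_def P4_def fr_def R_def
    using assms jS finS by (simp add: sum.distrib sum_distrib_left[symmetric] sum_divide_distrib[symmetric])
  also have "\<dots> = g x + (if x = i then m else 0) + fr x + s x" by (simp add: sRR)
  also have "\<dots> = mu E (1/2) i x"
    using assms
  proof (cases rule: S0_cases)
    case 1 then show ?thesis using memb fr_out[of i] ij unfolding mu_i g_def s_def m_def by (simp add: field_simps)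
  next
    case 2 then show ?thesis using memb fr_out[of j] ij eij unfolding mu_i g_def s_def m_def by simp
  next
    case 3 then show ?thesis using memb fr_out[of x] ij unfolding mu_i g_def s_def m_def
      by (auto simp: field_simps)
  next
    case 4 then show ?thesis using memb ij unfolding mu_i g_def s_def m_def
      by auto
  next
    case 5 then show ?thesis using memb fr_out[of x] ij unfolding mu_i g_def s_def m_def
      by auto
  qed
  finally show ?thesis .
qed

lemma col: assumes "y \<in> S0" shows "(\<Sum>x\<in>S0. PI x y) = mu E (1/2) j y"
proof -
  have h1: "(\<Sum>x\<in>S0. P1 x y) = g y" unfolding P1_def using assms finS by simp
  have h2: "(\<Sum>x\<in>S0. P2 x y) = (if y = j then m else 0)"
  proof -
    have "\<And>x. P2 x y = (if x = i then (if y = j then m else 0) else 0)" unfolding P2_def by auto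
    then show ?thesis using iS finS by simp
  qed
  have h4: "(\<Sum>x\<in>S0. P4 x y) = r y"
  proof -
    have "(\<Sum>x\<in>S0. P4 x y) = (\<Sum>x\<in>S0. s x) * r y / R"
      unfolding P4_def by (simp add: sum_distrib_right sum_divide_distrib)
    also have "\<dots> = r y * R / R" by (simp add: sum_s_R mult.commute)
    finally show ?thesis using rRR by simp
  qed
  have "(\<Sum>x\<in>S0. PI x y) = g y + (if y = j then m else 0) + fc y + r y"
    unfolding PI_def fc_def using h1 h2 h4 by (simp add: sum.distrib)
  also have "\<dots> = mu E (1/2) j y"
    using assms
  proof (cases rule: S0_cases)
    case 1 then show ?thesis using memb fc_out[of i] ij eji unfolding mu_j g_def r_def m_def by simp
  next
    case 2 then show ?thesis using memb fc_out[of j] ij unfolding mu_j g_def r_def m_def by (simp add: field_simps)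
  next
    case 3 then show ?thesis using memb fc_out[of y] ij unfolding mu_j g_def r_def m_def
      by auto
  next
    case 4 then show ?thesis using memb fc_out[of y] ij unfolding mu_j g_def r_def m_def
      by auto
  next
    case 5 then show ?thesis using memb ij unfolding mu_j g_def r_def m_def
      by auto
  qed
  finally show ?thesis .
qed

lemma PI_C: "PI \<in> C (1/2)"
proof -
  have nn: "0 \<le> PI x y" for x y
    unfolding PI_def P1_def P2_def P4_def using g0 m0 fl0 s0 r0 R0
    by (intro add_nonneg_nonneg divide_nonneg_nonneg mult_nonneg_nonneg) auto
  have out: "PI x y = 0" if "x \<notin> S0 \<or> y \<notin> S0" for x y
    unfolding PI_def P1_def P2_def P4_def using that g_out fl_out s_out r_out2 iS jS by auto
  show ?thesis unfolding C_def couplings_def using nn out row col by auto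
qed

end


context E3 begin

lemma cost_P1: "cost P1 = 0"
proof -
  have h: "\<And>x y. P1 x y * real (gdist E x y) = 0" unfolding P1_def by (auto simp: gdist_refl)
  show ?thesis unfolding cost_def by (simp only: h sum.neutral_const)
qed

lemma cost_P2: "cost P2 \<le> m"
proof -
  have "P2 = (\<lambda>x y. 0 * (\<lambda>_ _. 0::real) x y + m * (if x = i \<and> y = j then 1 else 0))"
    by (auto simp: P2_def fun_eq_iff)
  then have "cost P2 = m * real (gdist E i j)" using cost_mix[of 0 "\<lambda>_ _. 0" m] by simp
  also have "\<dots> \<le> m" using gdist_1[OF eij] m0 by (simp add: mult_left_le)
  finally show ?thesis .
qed

lemma cost_fl: "cost fl \<le> F"
  unfolding cost_def F_def fr_def
proof (intro sum_mono)
  fix x y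
  show "fl x y * real (gdist E x y) \<le> fl x y"
  proof (cases "fl x y = 0")
    case False
    then have "E x y" unfolding fl_def by (auto split: if_splits)
    then show ?thesis using gdist_1[of x y] fl0[of x y] by (simp add: mult_left_le)
  qed simp
qed

lemma sumA_fr: "(\<Sum>x\<in>A. fr x) = F"
proof -
  have "(\<Sum>x\<in>S0. fr x) = (\<Sum>x\<in>S0. if x \<in> A then fr x else 0)"
    using fr_out by (intro sum.cong) auto
  then show ?thesis unfolding F_def using finS subS by (simp add: sum_ind)
qed

lemma cost_P4: "cost P4 \<le> 2 * R + a / 2 * real (card A) - F"
proof -
  define cc where "cc x = (if x \<in> A then 3 else (2::real))" for x
  have pw: "P4 x y * real (gdist E x y) \<le> P4 x y * cc x" for x y
  proof (cases "s x = 0 \<or> r y = 0")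
    case True then show ?thesis unfolding P4_def by auto
  next
    case False
    then have y: "y \<in> B" using r_out by blast
    have x: "x = i \<or> x \<in> T \<or> x \<in> A" using False unfolding s_def by (auto split: if_splits)
    have "real (gdist E x y) \<le> cc x"
    proof -
      have ejy: "E j y" using memb y by blast
      { assume "x = i"
        then have "gdist E x y \<le> 2" using gdist_2[OF eij ejy] by simp
        moreover have "x \<notin> A" using \<open>x = i\<close> memb by simp
        ultimately have ?thesis unfolding cc_def by simp }
      moreover
      { assume xt: "x \<in> T"
        then have "E x j" using memb symE by blast
        then have "gdist E x y \<le> 2" using gdist_2 ejy by blast
        moreover have "x \<notin> A" using xt memb by blast
        ultimately have ?thesis unfolding cc_def by simp }
      moreover
      { assume xa: "x \<in> A"
        then have "E x i" using memb symE by blast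
        then have "gdist E x y \<le> 3" using gdist_3 eij ejy by blast
        then have ?thesis using xa unfolding cc_def by simp }
      ultimately show ?thesis using x by blast
    qed
    moreover have "0 \<le> P4 x y" unfolding P4_def using s0 r0 R0 by simp
    ultimately show ?thesis by (simp add: mult_left_mono)
  qed
  have "cost P4 \<le> (\<Sum>x\<in>S0. \<Sum>y\<in>S0. P4 x y * cc x)"
    unfolding cost_def by (intro sum_mono pw)
  also have "\<dots> = (\<Sum>x\<in>S0. cc x * s x)"
  proof (rule sum.cong)
    fix x
    have "(\<Sum>y\<in>S0. P4 x y * cc x) = cc x * (s x * R / R)"
      unfolding P4_def R_def by (simp add: sum_distrib_left sum_distrib_right sum_divide_distrib algebra_simps)
    then show "(\<Sum>y\<in>S0. P4 x y * cc x) = cc x * s x" using sRR by simp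
  qed simp
  also have "\<dots> = (\<Sum>x\<in>S0. 2 * s x + (if x \<in> A then s x else 0))"
    unfolding cc_def by (intro sum.cong) auto
  also have "\<dots> = 2 * R + (\<Sum>x\<in>A. s x)"
    using finS subS by (simp add: sum.distrib sum_distrib_left[symmetric] sum_s_R sum_ind)
  also have "(\<Sum>x\<in>A. s x) = (\<Sum>x\<in>A. a / 2 - fr x)"
    unfolding s_def using memb by (intro sum.cong) auto
  also have "\<dots> = a / 2 * real (card A) - F" by (simp add: sum_subtractf sumA_fr)
  finally show ?thesis by simp
qed

lemma PI_eq: "PI = (\<lambda>x y. (\<lambda>x y. (\<lambda>x y. P1 x y + P2 x y) x y + fl x y) x y + P4 x y)"
  unfolding PI_def by (simp add: fun_eq_iff)

lemma cost_PI: "cost PI \<le> m + 2 * R + a / 2 * real (card A)"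
proof -
  have "cost PI = cost P1 + cost P2 + cost fl + cost P4"
    unfolding PI_eq cost_add by simp
  then show ?thesis using cost_P1 cost_P2 cost_fl cost_P4 by linarith
qed

lemma F_ge1: "c * real (card (sq E i j)) \<le> F"
proof -
  have "c * real (card (sq E i j)) = (\<Sum>x\<in>sq E i j. c)" by simp
  also have "\<dots> \<le> (\<Sum>x\<in>sq E i j. fr x)"
  proof (rule sum_mono)
    fix x assume x: "x \<in> sq E i j"
    then have xa: "x \<in> A" using sq_sub by blast
    obtain w where "w \<in> sqw E i j x" using x unfolding sq_def by blast
    then have w: "w \<in> S0" "w \<in> B" "E x w" using sqw_A[OF xa] by auto
    have "c = fl x w" unfolding fl_def using xa w by simp
    also have "\<dots> \<le> fr x" unfolding fr_def using w finS fl0 by (intro member_le_sum) auto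
    finally show "c \<le> fr x" .
  qed
  also have "\<dots> \<le> F" unfolding F_def using sq_sub subS finS fr0 by (intro sum_mono2) auto
  finally show ?thesis .
qed

lemma F_ge2: "c * real (card (sq E j i)) \<le> F"
proof -
  have "c * real (card (sq E j i)) = (\<Sum>y\<in>sq E j i. c)" by simp
  also have "\<dots> \<le> (\<Sum>y\<in>sq E j i. fc y)"
  proof (rule sum_mono)
    fix y assume y: "y \<in> sq E j i"
    then have yb: "y \<in> B" using sq_sub by blast
    obtain w where "w \<in> sqw E j i y" using y unfolding sq_def by blast
    then have w: "w \<in> S0" "w \<in> A" "E w y" using sqw_B[OF yb] by auto
    have "c = fl w y" unfolding fl_def using yb w by simp
    also have "\<dots> \<le> fc y" unfolding fc_def using w finS fl0 by (intro member_le_sum) auto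
    finally show "c \<le> fc y" .
  qed
  also have "\<dots> \<le> F" unfolding sum_fr_fc using sq_sub subS finS fc0 by (intro sum_mono2) auto
  finally show ?thesis .
qed

lemma main_bound: "bfc E i j \<le> f (1/2)"
proof -
  have W: "W (1/2) \<le> cost PI" using W_le[of "1/2" PI] PI_C by simp
  define t where "t = real (card T)"
  have ci: "real (deg E i) = 1 + t + real (card A)" using card_i unfolding t_def by simp
  have cj: "real (deg E j) = 1 + t + real (card B)" using card_j unfolding t_def by simp
  have ap: "a * real (card A) = 1 - a - a * t" using adi ci by (simp add: algebra_simps)
  have bq: "b * real (card B) = 1 - b - b * t" using bdj cj by (simp add: algebra_simps)
  have fb: "f (1/2) \<ge> -2 + 2*a + 2*b + 2*b*t + a*t + 4*F"
  proof -
    have "f (1/2) = 2 * (1 - W (1/2))" unfolding f_def by simp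
    moreover have "W (1/2) \<le> m + 2 * R + a / 2 * real (card A)" using W cost_PI by linarith
    ultimately show ?thesis unfolding sum_r m_def using ap bq by (simp add: algebra_simps) (simp add: field_simps)
  qed
  have F0: "0 \<le> F" unfolding F_def using fr0 by (simp add: sum_nonneg)
  have mx: "max (real (deg E i)) (real (deg E j)) = real (deg E j)"
    and mn: "min (real (deg E i)) (real (deg E j)) = real (deg E i)" using dle by auto
  show ?thesis
  proof (cases "real (deg E i) = 1")
    case True
    then have "t = 0" "a = 1" using ci unfolding a_def t_def by auto
    then have "0 \<le> f (1/2)" using fb F0 ab by (simp; linarith)
    then show ?thesis unfolding bfc_def Let_def mn using True by simp
  next
    case False
    define X where "X = (if sq E i j = {} then 0 else inverse (real (gamma_max E i j)) / real (deg E j)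
                  * (real (card (sq E i j)) + real (card (sq E j i))))"
    have X: "X \<le> 4 * F"
    proof (cases "sq E i j = {}")
      case True then show ?thesis unfolding X_def using F0 by simp
    next
      case False
      have "inverse (real (gamma_max E i j)) / real (deg E j) = 2 * c" unfolding c_def b_def by simp
      then have "X = 2 * (c * real (card (sq E i j))) + 2 * (c * real (card (sq E j i)))"
        unfolding X_def using False by (simp add: algebra_simps)
      then show ?thesis using F_ge1 F_ge2 by linarith
    qed
    have e1: "2 / real (deg E i) = 2 * a" "2 / real (deg E j) = 2 * b"
      "2 * real (card (tri E i j)) / real (deg E j) = 2 * b * t"
      "real (card (tri E i j)) / real (deg E i) = a * t"
      unfolding a_def b_def t_def T_def by simp_all
    have "bfc E i j = 2 * a + 2 * b - 2 + 2 * b * t + a * t + X"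
      unfolding bfc_def Let_def mx mn X_def using False e1 by simp
    then show ?thesis using fb X by linarith
  qed
qed

end


context G begin

lemma couplings_swap:
  assumes "\<pi> \<in> couplings S m1 m2"
  shows "(\<lambda>x y. \<pi> y x) \<in> couplings S m2 m1"
  using assms unfolding couplings_def by auto

lemma cost_swap:
  "(\<Sum>x\<in>S. \<Sum>y\<in>S. \<pi> y x * real (gdist E x y)) = (\<Sum>x\<in>S. \<Sum>y\<in>S. \<pi> x y * real (gdist E x y))"
  by (subst sum.swap) (simp add: gdist_sym)

lemma img_sub:
  "(\<lambda>\<pi>. \<Sum>x\<in>S. \<Sum>y\<in>S. \<pi> x y * real (gdist E x y)) ` couplings S m1 m2
   \<subseteq> (\<lambda>\<pi>. \<Sum>x\<in>S. \<Sum>y\<in>S. \<pi> x y * real (gdist E x y)) ` couplings S m2 m1"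
proof
  fix v assume "v \<in> (\<lambda>\<pi>. \<Sum>x\<in>S. \<Sum>y\<in>S. \<pi> x y * real (gdist E x y)) ` couplings S m1 m2"
  then obtain \<pi> where p: "\<pi> \<in> couplings S m1 m2" and v: "v = (\<Sum>x\<in>S. \<Sum>y\<in>S. \<pi> x y * real (gdist E x y))" by blast
  have "v = (\<Sum>x\<in>S. \<Sum>y\<in>S. (\<lambda>x y. \<pi> y x) x y * real (gdist E x y))" using v cost_swap[where S=S and \<pi>=\<pi>] by simp
  then show "v \<in> (\<lambda>\<pi>. \<Sum>x\<in>S. \<Sum>y\<in>S. \<pi> x y * real (gdist E x y)) ` couplings S m2 m1"
    by (rule image_eqI[OF _ couplings_swap[OF p]])
qed

lemma W1_sym: "W1 E m1 m2 = W1 E m2 m1"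
proof -
  have e: "{x. m2 x \<noteq> 0} \<union> {x. m1 x \<noteq> 0} = {x. m1 x \<noteq> 0} \<union> {x. m2 x \<noteq> 0}" by auto
  define S where "S = {x. m1 x \<noteq> 0} \<union> {x. m2 x \<noteq> 0}"
  have "(\<lambda>\<pi>. \<Sum>x\<in>S. \<Sum>y\<in>S. \<pi> x y * real (gdist E x y)) ` couplings S m1 m2
      = (\<lambda>\<pi>. \<Sum>x\<in>S. \<Sum>y\<in>S. \<pi> x y * real (gdist E x y)) ` couplings S m2 m1"
    by (rule subset_antisym[OF img_sub img_sub])
  then show ?thesis unfolding W1_def Let_def e S_def[symmetric] by simp
qed

lemma ollivier_sym: "ollivier E i j = ollivier E j i"
  unfolding ollivier_def using W1_sym by simp

lemma sq_ne: "sq E i j \<noteq> {} \<Longrightarrow> sq E j i \<noteq> {}"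
proof -
  assume "sq E i j \<noteq> {}"
  then obtain k w where k: "k \<in> nbrs E i" "k \<notin> nbrs E j" "k \<noteq> j" and w: "w \<in> sqw E i j k"
    unfolding sq_def by blast
  then have "k \<in> sqw E j i w" using symE unfolding sqw_def nbrs_def by auto
  then have "w \<in> sq E j i" using w unfolding sq_def sqw_def by auto
  then show ?thesis by blast
qed

lemma bfc_sym: "bfc E i j = bfc E j i"
proof -
  have e: "(sq E i j = {}) = (sq E j i = {})" using sq_ne by blast
  show ?thesis unfolding bfc_def Let_def tri_def gamma_max_def e
    by (simp add: Int_commute max.commute min.commute add.commute)
qed

end

lemma mono_Lim_ge:
  fixes g :: "real \<Rightarrow> real"
  assumes mono: "\<And>x y. 0 < x \<Longrightarrow> x < y \<Longrightarrow> y < 1 \<Longrightarrow> g x \<le> g y"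
    and bd: "\<And>x. 0 < x \<Longrightarrow> x < 1 \<Longrightarrow> g x \<le> M"
    and a: "0 < a" "a < 1"
  shows "g a \<le> Lim (at_left 1) g"
proof -
  define L where "L = Sup (g ` {0<..<1})"
  have ne: "g ` {0<..<1} \<noteq> {}" using a by auto
  have bdd: "bdd_above (g ` {0<..<1})" using bd by (auto intro!: bdd_aboveI[where M=M])
  have up: "g x \<le> L" if "0 < x" "x < 1" for x
    unfolding L_def by (rule cSup_upper) (use that bdd in auto)
  have "(g \<longlongrightarrow> L) (at_left 1)"
  proof (rule order_tendstoI)
    fix b assume "b < L"
    then obtain x0 where x0: "0 < x0" "x0 < 1" "b < g x0"
      using less_cSup_iff[OF ne bdd] unfolding L_def by auto
    show "\<forall>\<^sub>F x in at_left 1. b < g x"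
      using eventually_at_left_real[OF x0(2)]
      by eventually_elim (use x0 mono in \<open>force\<close>)
  next
    fix b assume "L < b"
    show "\<forall>\<^sub>F x in at_left 1. g x < b"
      using eventually_at_left_real[of 0 "1::real", OF zero_less_one]
      by eventually_elim (use up \<open>L < b\<close> in \<open>force\<close>)
  qed
  then have "Lim (at_left 1) g = L" by (intro tendsto_Lim) simp_all
  then show ?thesis using up a by simp
qed


theorem theorem2:
  fixes E :: "'a \<Rightarrow> 'a \<Rightarrow> bool" and i j :: 'a
  assumes "simple_graph E" and "locally_finite E" and "connected_graph E"
    and "E i j"
  shows "ollivier E i j \<ge> bfc E i j"
proof -
  interpret G E using assms(1-3) by unfold_locales
  have key: "bfc E p q \<le> ollivier E p q" if pq: "E p q" "deg E p \<le> deg E q" for p q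
  proof -
    interpret E3 E p q using pq by unfold_locales
    have "f = (\<lambda>\<alpha>. (1 - W1 E (mu E \<alpha> p) (mu E \<alpha> q)) / (1 - \<alpha>))"
      by (rule ext) (simp add: f_def W_def)
    then have "ollivier E p q = Lim (at_left 1) f"
      unfolding ollivier_def by simp
    moreover have "f (1/2) \<le> Lim (at_left 1) f"
      by (rule mono_Lim_ge[where M=2]) (auto intro: f_mono f_bdd)
    ultimately show ?thesis using main_bound by simp
  qed
  show ?thesis
  proof (cases "deg E i \<le> deg E j")
    case True then show ?thesis using key assms(4) by simp
  next
    case False
    then have "bfc E j i \<le> ollivier E j i" using key symE assms(4) by simp
    then show ?thesis using bfc_sym ollivier_sym by simp
  qed
qed


end
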